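(* For every set $q$ of operations on a set $\Omega$, $\mathrm{Sim}(q)$ is a full monoid, i.e. it is closed under relational composition and converses, contains $\approx_{\mathrm{Sim}(q)}$, and is closed under subsimilarities.
   Context: A similarity on $\Omega$ is a relation $\pi\subseteq\Omega\times\Omega$ such that every $a$ has some $b$ with $a\pi b$ and every $b$ has some $a$ with $a\pi b$; $\bar a\,\pi\,\bar b$ means coordinatewise relatedness; for $R,S\subseteq\Omega^k$, $R\,\pi\,S$ means $\bar a\pi\bar b$ implies ($\bar a\in R\iff\bar b\in S$). A set of operations is a set of finitary relations and quantifiers (subsets of $\mathcal P(\Omega^{k_1})\times\cdots\times\mathcal P(\Omega^{k_l})$) on $\Omega$; $\mathscr L^-_{\infty\infty}(q)$ is the equality-free infinitary logic with predicate and Lindström quantifier symbols for members of $q$. $a\sim_q b$ iff for all formulas $\phi(x,\bar y)$ of $\mathscr L^-_{\infty\infty}(q)$ and tuples $\bar c$ from $\Omega$, $\phi(a,\bar c)\iff\phi(b,\bar c)$. A relation is invariant under a similarity or equivalence relation $\rho$ if $\bar a\rho\bar b$ implies $\bar a\in R\iff\bar b\in R$; a quantifier $Q$ is $\sim$-invariant under $\pi$ if for all $\bar R,\bar S$ of its type with every component invariant under $\sim$ and $R_i\,\pi\,S_i$: $\bar R\in Q\iff\bar S\in Q$. $\mathrm{Sim}(q)$ is the set of similarities under which every relation of $q$ is invariant and every quantifier of $q$ is $\sim_q$-invariant. For a set $\Pi$ of similarities, $a\approx_\Pi b$ iff for every finite $k$ and $\bar c\in\Omega^k$ there is $\pi\in\Pi$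 with $(a,\bar c)\,\pi\,(b,\bar c)$. A subsimilarity of $\pi$ is a similarity $\pi'\subseteq\pi$. *)

theory Defs
  imports Main
begin

text \<open>Tuples from Omega (the universe of type 'a) are represented as lists.
  An operation is either a finitary relation of arity k (a set of k-lists)
  or a Lindstroem quantifier of type (k_1,...,k_l) (a set of l-lists of relations,
  the i-th being a set of k_i-lists).\<close>

datatype 'a operation =
    Rel nat "'a list set"
  | Quant "nat list" "'a list set list set"

definition ops_wf :: "'a operation set \<Rightarrow> bool" where
  "ops_wf q \<longleftrightarrow>
     (\<forall>k R. Rel k R \<in> q \<longrightarrow> R \<subseteq> {as. length as = k}) \<and>
     (\<forall>ks Q. Quant ks Q \<in> q \<longrightarrow>
        Q \<subseteq> {Rs. length Rs = length ks \<and>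
                 (\<forall>i<length ks. Rs ! i \<subseteq> {as. length as = ks ! i})})"

definition similarity :: "('a \<times> 'a) set \<Rightarrow> bool" where
  "similarity \<pi> \<longleftrightarrow> (\<forall>a. \<exists>b. (a, b) \<in> \<pi>) \<and> (\<forall>b. \<exists>a. (a, b) \<in> \<pi>)"

definition rel_sim :: "('a \<Rightarrow> 'a \<Rightarrow> bool) \<Rightarrow> 'a list set \<Rightarrow> 'a list set \<Rightarrow> bool" where
  "rel_sim P R S \<longleftrightarrow> (\<forall>xs ys. list_all2 P xs ys \<longrightarrow> (xs \<in> R \<longleftrightarrow> ys \<in> S))"

definition invariant :: "('a \<Rightarrow> 'a \<Rightarrow> bool) \<Rightarrow> 'a list set \<Rightarrow> bool" where
  "invariant P R \<longleftrightarrow> rel_sim P R R"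

definition upd :: "('v \<Rightarrow> 'a) \<Rightarrow> 'v list \<Rightarrow> 'a list \<Rightarrow> ('v \<Rightarrow> 'a)" where
  "upd s xs as = foldr (\<lambda>(x, a) f. f(x := a)) (zip xs as) s"

text \<open>Semantics of equality-free infinitary logic L^-_{infinity infinity}(q), with variables
  of type 'v: a formula is identified with the set of assignments satisfying it.\<close>
inductive_set definable :: "'a operation set \<Rightarrow> ('v \<Rightarrow> 'a) set set"
  for q :: "'a operation set" where
  atom: "\<lbrakk>Rel k R \<in> q; length xs = k\<rbrakk> \<Longrightarrow> {s. map s xs \<in> R} \<in> definable q"
| neg: "D \<in> definable q \<Longrightarrow> - D \<in> definable q"
| conj: "(\<forall>D\<in>S. D \<in> definable q) \<Longrightarrow> \<Inter> S \<in> definable q"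
| ex: "D \<in> definable q \<Longrightarrow>
         {s. \<exists>t. (\<forall>v. v \<notin> W \<longrightarrow> t v = s v) \<and> t \<in> D} \<in> definable q"
| quant: "\<lbrakk>Quant ks Q \<in> q; length Ds = length ks; length xss = length ks;
           \<forall>i<length ks. Ds ! i \<in> definable q \<and> length (xss ! i) = ks ! i \<and> distinct (xss ! i)\<rbrakk>
          \<Longrightarrow> {s. map (\<lambda>i. {as. length as = ks ! i \<and> upd s (xss ! i) as \<in> Ds ! i}) [0..<length ks] \<in> Q}
              \<in> definable q"

text \<open>a ~_q b: no formula phi(x, ybar) distinguishes a and b for any parameters.\<close>
definition sim_eq :: "'v itself \<Rightarrow> 'a operation set \<Rightarrow> 'a \<Rightarrow> 'a \<Rightarrow> bool" where
  "sim_eq (TYPE('v)) q a b \<longleftrightarrow>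
     (\<forall>D \<in> (definable q :: ('v \<Rightarrow> 'a) set set). \<forall>x s. s(x := a) \<in> D \<longleftrightarrow> s(x := b) \<in> D)"

definition quant_inv ::
  "('a \<Rightarrow> 'a \<Rightarrow> bool) \<Rightarrow> ('a \<times> 'a) set \<Rightarrow> nat list \<Rightarrow> 'a list set list set \<Rightarrow> bool" where
  "quant_inv E \<pi> ks Q \<longleftrightarrow>
     (\<forall>Rs Ss. length Rs = length ks \<and> length Ss = length ks \<and>
        (\<forall>i<length ks. Rs ! i \<subseteq> {as. length as = ks ! i} \<and> Ss ! i \<subseteq> {as. length as = ks ! i} \<and>
            invariant E (Rs ! i) \<and> invariant E (Ss ! i) \<and>
            rel_sim (\<lambda>a b. (a, b) \<in> \<pi>) (Rs ! i) (Ss ! i))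
        \<longrightarrow> (Rs \<in> Q \<longleftrightarrow> Ss \<in> Q))"

definition Sim :: "'v itself \<Rightarrow> 'a operation set \<Rightarrow> ('a \<times> 'a) set set" where
  "Sim V q = {\<pi>. similarity \<pi> \<and>
      (\<forall>k R. Rel k R \<in> q \<longrightarrow> invariant (\<lambda>a b. (a, b) \<in> \<pi>) R) \<and>
      (\<forall>ks Q. Quant ks Q \<in> q \<longrightarrow> quant_inv (sim_eq V q) \<pi> ks Q)}"

definition approx :: "('a \<times> 'a) set set \<Rightarrow> ('a \<times> 'a) set" where
  "approx \<Pi> = {(a, b). \<forall>cs. \<exists>\<pi>\<in>\<Pi>. list_all2 (\<lambda>x y. (x, y) \<in> \<pi>) (a # cs) (b # cs)}"

definition full_monoid :: "('a \<times> 'a) set set \<Rightarrow> bool" where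
  "full_monoid \<Pi> \<longleftrightarrow>
     (\<forall>\<pi>\<in>\<Pi>. \<forall>\<sigma>\<in>\<Pi>. \<pi> O \<sigma> \<in> \<Pi>) \<and>
     (\<forall>\<pi>\<in>\<Pi>. \<pi>\<inverse> \<in> \<Pi>) \<and>
     approx \<Pi> \<in> \<Pi> \<and>
     (\<forall>\<pi>\<in>\<Pi>. \<forall>\<pi>'. similarity \<pi>' \<and> \<pi>' \<subseteq> \<pi> \<longrightarrow> \<pi>' \<in> \<Pi>)"

end

theory Submission
  imports Defs
begin

lemma upd_Cons: "upd s (x#xs) (a#as) = (upd s xs as)(x:=a)" by (simp add: upd_def)
lemma upd_Nil1[simp]: "upd s [] as = s" by (simp add: upd_def)
lemma upd_Nil2[simp]: "upd s xs [] = s" by (simp add: upd_def)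

lemma upd_swap: "x \<notin> set xs \<Longrightarrow> upd (s(x:=b)) xs as = (upd s xs as)(x:=b)"
proof (induction xs arbitrary: as)
  case Nil then show ?case by simp
next
  case (Cons y ys) then show ?case
    by (cases as) (auto simp: upd_Cons fun_upd_twist)
qed

lemma upd_sim_eq:
  fixes s :: "'v \<Rightarrow> 'a"
  assumes "D \<in> definable q" "distinct xs" "list_all2 (sim_eq TYPE('v) q) as bs"
  shows "upd s xs as \<in> D \<longleftrightarrow> upd s xs bs \<in> D"
  using assms(2,3)
proof (induction xs arbitrary: s as bs)
  case Nil then show ?case by simp
next
  case (Cons x xs)
  show ?case
  proof (cases as)
    case Nil then show ?thesis using Cons.prems by simp
  next
    case (Cons a as')
    then obtain b bs' where bs: "bs = b # bs'" "sim_eq TYPE('v) q a b" "list_all2 (sim_eq TYPE('v) q) as' bs'"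
      using Cons.prems(2) by (auto simp: list_all2_Cons1)
    have xn: "x \<notin> set xs" "distinct xs" using Cons.prems(1) by auto
    have "upd s (x#xs) as \<in> D \<longleftrightarrow> (upd s xs as')(x:=a) \<in> D" using Cons by (simp add: upd_Cons)
    also have "\<dots> \<longleftrightarrow> (upd s xs as')(x:=b) \<in> D" using bs(2) assms(1) by (simp add: sim_eq_def)
    also have "\<dots> \<longleftrightarrow> upd (s(x:=b)) xs as' \<in> D" by (simp only: upd_swap[OF xn(1)])
    also have "\<dots> \<longleftrightarrow> upd (s(x:=b)) xs bs' \<in> D" using Cons.IH[OF xn(2) bs(3)] by blast
    also have "\<dots> \<longleftrightarrow> upd s (x#xs) bs \<in> D" by (simp only: upd_swap[OF xn(1)] bs(1) upd_Cons)
    finally show ?thesis .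
  qed
qed

lemma upd_rel:
  assumes "\<forall>v. (s v, t v) \<in> \<pi>" "list_all2 (\<lambda>a b. (a,b) \<in> \<pi>) as bs"
  shows "(upd s xs as v, upd t xs bs v) \<in> \<pi>"
  using assms(2)
proof (induction xs arbitrary: as bs)
  case Nil then show ?case using assms(1) by simp
next
  case (Cons x xs) then show ?case using assms(1)
    by (cases as; cases bs) (auto simp: upd_Cons)
qed

lemma sim_definable:
  fixes D :: "('v \<Rightarrow> 'a) set"
  assumes "D \<in> definable q" "\<pi> \<in> Sim TYPE('v) q"
  shows "\<forall>s t. (\<forall>v. (s v, t v) \<in> \<pi>) \<longrightarrow> (s \<in> D \<longleftrightarrow> t \<in> D)"
  using assms(1)
proof induct
  case (atom k R xs)
  have "invariant (\<lambda>a b. (a, b) \<in> \<pi>) R" using assms(2) atom(1) by (auto simp: Sim_def)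
  then show ?case
    by (auto simp: invariant_def rel_sim_def list_all2_conv_all_nth)
next
  case (neg D) then show ?case by blast
next
  case (conj S) then show ?case by blast
next
  case (ex D W)
  have sp: "similarity \<pi>" using assms(2) by (simp add: Sim_def)
  show ?case
  proof (intro allI impI iffI)
    fix s t :: "'v \<Rightarrow> 'a" assume st: "\<forall>v. (s v, t v) \<in> \<pi>"
    {
      assume "s \<in> {s. \<exists>t. (\<forall>v. v \<notin> W \<longrightarrow> t v = s v) \<and> t \<in> D}"
      then obtain s' where s': "\<forall>v. v \<notin> W \<longrightarrow> s' v = s v" "s' \<in> D" by blast
      define t' where "t' v = (if v \<in> W then (SOME b. (s' v, b) \<in> \<pi>) else t v)" for v
      have "\<forall>v. (s' v, t' v) \<in> \<pi>"
      proof
        fix v show "(s' v, t' v) \<in> \<pi>"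
          using sp st s'(1) by (cases "v \<in> W") (auto simp: t'_def similarity_def intro: someI_ex)
      qed
      then have "t' \<in> D" using ex(2) s'(2) by blast
      then show "t \<in> {s. \<exists>t. (\<forall>v. v \<notin> W \<longrightarrow> t v = s v) \<and> t \<in> D}"
        by (intro CollectI exI[of _ t']) (auto simp: t'_def)
    }
    {
      assume "t \<in> {s. \<exists>t. (\<forall>v. v \<notin> W \<longrightarrow> t v = s v) \<and> t \<in> D}"
      then obtain t' where t': "\<forall>v. v \<notin> W \<longrightarrow> t' v = t v" "t' \<in> D" by blast
      define s' where "s' v = (if v \<in> W then (SOME a. (a, t' v) \<in> \<pi>) else s v)" for v
      have "\<forall>v. (s' v, t' v) \<in> \<pi>"
      proof
        fix v show "(s' v, t' v) \<in> \<pi>"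
          using sp st t'(1) by (cases "v \<in> W") (auto simp: s'_def similarity_def intro: someI_ex)
      qed
      then have "s' \<in> D" using ex(2) t'(2) by blast
      then show "s \<in> {s. \<exists>t. (\<forall>v. v \<notin> W \<longrightarrow> t v = s v) \<and> t \<in> D}"
        by (intro CollectI exI[of _ s']) (auto simp: s'_def)
    }
  qed
next
  case (quant ks Q Ds xss)
  have qi: "quant_inv (sim_eq TYPE('v) q) \<pi> ks Q" using assms(2) quant(1) by (auto simp: Sim_def)
  show ?case
  proof (intro allI impI)
    fix s t :: "'v \<Rightarrow> 'a" assume st: "\<forall>v. (s v, t v) \<in> \<pi>"
    define F where "F u = map (\<lambda>i. {as. length as = ks ! i \<and> upd u (xss ! i) as \<in> Ds ! i}) [0..<length ks]" for u
    have inv: "invariant (sim_eq TYPE('v) q) (F u ! i)" if "i < length ks" for u i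
      unfolding invariant_def rel_sim_def
    proof (intro allI impI)
      fix as bs assume ab: "list_all2 (sim_eq TYPE('v) q) as bs"
      have "upd u (xss ! i) as \<in> Ds ! i \<longleftrightarrow> upd u (xss ! i) bs \<in> Ds ! i"
        using upd_sim_eq[OF _ _ ab] quant(4) that by blast
      then show "as \<in> F u ! i \<longleftrightarrow> bs \<in> F u ! i"
        using that ab list_all2_lengthD by (fastforce simp: F_def)
    qed
    have rs: "rel_sim (\<lambda>a b. (a, b) \<in> \<pi>) (F s ! i) (F t ! i)" if "i < length ks" for i
      unfolding rel_sim_def
    proof (intro allI impI)
      fix as bs assume ab: "list_all2 (\<lambda>a b. (a, b) \<in> \<pi>) as bs"
      have "\<forall>v. (upd s (xss ! i) as v, upd t (xss ! i) bs v) \<in> \<pi>"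
        using upd_rel[OF st ab] by blast
      then have "upd s (xss ! i) as \<in> Ds ! i \<longleftrightarrow> upd t (xss ! i) bs \<in> Ds ! i"
        using quant(4) that by blast
      then show "as \<in> F s ! i \<longleftrightarrow> bs \<in> F t ! i"
        using that ab list_all2_lengthD by (fastforce simp: F_def)
    qed
    have pre: "length (F s) = length ks \<and> length (F t) = length ks \<and> (\<forall>i<length ks. F s ! i \<subseteq> {as. length as = ks ! i} \<and> F t ! i \<subseteq> {as. length as = ks ! i} \<and> invariant (sim_eq TYPE('v) q) (F s ! i) \<and> invariant (sim_eq TYPE('v) q) (F t ! i) \<and> rel_sim (\<lambda>a b. (a, b) \<in> \<pi>) (F s ! i) (F t ! i))"
      using inv rs unfolding F_def by auto
    have "F s \<in> Q \<longleftrightarrow> F t \<in> Q"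
      using qi pre unfolding quant_inv_def by blast
    then show "s \<in> {s. map (\<lambda>i. {as. length as = ks ! i \<and> upd s (xss ! i) as \<in> Ds ! i}) [0..<length ks] \<in> Q}
        \<longleftrightarrow> t \<in> {s. map (\<lambda>i. {as. length as = ks ! i \<and> upd s (xss ! i) as \<in> Ds ! i}) [0..<length ks] \<in> Q}"
      by (simp add: F_def)
  qed
qed


lemma sim_eq_refl: "sim_eq TYPE('v) q a a" by (simp add: sim_eq_def)
lemma sim_eq_sym: "sim_eq TYPE('v) q a b \<Longrightarrow> sim_eq TYPE('v) q b a" by (simp add: sim_eq_def)

lemma Sim_similarity: "\<pi> \<in> Sim V q \<Longrightarrow> similarity \<pi>" by (simp add: Sim_def)

lemma pick_left: "similarity \<pi> \<Longrightarrow> list_all2 (\<lambda>a b. (a,b)\<in>\<pi>) (map (\<lambda>z. SOME u. (u,z)\<in>\<pi>) zs) zs"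
  by (auto simp: list_all2_conv_all_nth similarity_def intro: someI_ex)
lemma pick_right: "similarity \<pi> \<Longrightarrow> list_all2 (\<lambda>a b. (a,b)\<in>\<pi>) zs (map (\<lambda>z. SOME u. (z,u)\<in>\<pi>) zs)"
  by (auto simp: list_all2_conv_all_nth similarity_def intro: someI_ex)

lemma sim_pres:
  assumes "\<pi> \<in> Sim TYPE('v) q" "(a,b)\<in>\<pi>" "(a',b')\<in>\<pi>"
  shows "sim_eq TYPE('v) q a a' \<longleftrightarrow> sim_eq TYPE('v) q b b'"
proof
  have sp: "similarity \<pi>" using assms(1) by (simp add: Sim_def)
  assume h: "sim_eq TYPE('v) q a a'"
  show "sim_eq TYPE('v) q b b'" unfolding sim_eq_def
  proof (intro ballI allI)
    fix D :: "('v \<Rightarrow> 'a) set" and x and s :: "'v \<Rightarrow> 'a" assume D: "D \<in> definable q"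
    define s0 :: "'v \<Rightarrow> 'a" where "s0 v = (SOME u. (u, s v) \<in> \<pi>)" for v
    have s0: "(s0 v, s v) \<in> \<pi>" for v using sp by (auto simp: s0_def similarity_def intro: someI_ex)
    have 1: "\<forall>v. ((s0(x:=a)) v, (s(x:=b)) v) \<in> \<pi>" "\<forall>v. ((s0(x:=a')) v, (s(x:=b')) v) \<in> \<pi>"
      using s0 assms(2,3) by auto
    have "s0(x:=a) \<in> D \<longleftrightarrow> s0(x:=a') \<in> D" using h D by (simp add: sim_eq_def)
    then show "s(x:=b) \<in> D \<longleftrightarrow> s(x:=b') \<in> D"
      using sim_definable[OF D assms(1)] 1 by blast
  qed
next
  have sp: "similarity \<pi>" using assms(1) by (simp add: Sim_def)
  assume h: "sim_eq TYPE('v) q b b'"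
  show "sim_eq TYPE('v) q a a'" unfolding sim_eq_def
  proof (intro ballI allI)
    fix D :: "('v \<Rightarrow> 'a) set" and x and s :: "'v \<Rightarrow> 'a" assume D: "D \<in> definable q"
    define s0 :: "'v \<Rightarrow> 'a" where "s0 v = (SOME u. (s v, u) \<in> \<pi>)" for v
    have s0: "(s v, s0 v) \<in> \<pi>" for v using sp by (auto simp: s0_def similarity_def intro: someI_ex)
    have 1: "\<forall>v. ((s(x:=a)) v, (s0(x:=b)) v) \<in> \<pi>" "\<forall>v. ((s(x:=a')) v, (s0(x:=b')) v) \<in> \<pi>"
      using s0 assms(2,3) by auto
    have "s0(x:=b) \<in> D \<longleftrightarrow> s0(x:=b') \<in> D" using h D by (simp add: sim_eq_def)
    then show "s(x:=a) \<in> D \<longleftrightarrow> s(x:=a') \<in> D"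
      using sim_definable[OF D assms(1)] 1 by blast
  qed
qed

lemma l2_comp:
  "list_all2 (\<lambda>a b. (a,b) \<in> \<pi> O \<sigma>) xs ys \<Longrightarrow>
   \<exists>zs. list_all2 (\<lambda>a b. (a,b)\<in>\<pi>) xs zs \<and> list_all2 (\<lambda>a b. (a,b)\<in>\<sigma>) zs ys"
proof (induction rule: list_all2_induct)
  case Nil then show ?case by auto
next
  case (Cons x xs y ys)
  then obtain z zs where "(x,z)\<in>\<pi>" "(z,y)\<in>\<sigma>" "list_all2 (\<lambda>a b. (a,b)\<in>\<pi>) xs zs"
    "list_all2 (\<lambda>a b. (a,b)\<in>\<sigma>) zs ys" by blast
  then show ?case by (intro exI[of _ "z#zs"]) auto
qed

lemma l2_comp_intro:
  "list_all2 (\<lambda>a b. (a,b)\<in>\<pi>) xs zs \<Longrightarrow> list_all2 (\<lambda>a b. (a,b)\<in>\<sigma>) zs ys \<Longrightarrow>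
   list_all2 (\<lambda>a b. (a,b) \<in> \<pi> O \<sigma>) xs ys"
  by (auto simp: list_all2_conv_all_nth) (metis relcompI)

lemma l2_sim_pres:
  assumes "\<pi> \<in> Sim TYPE('v) q" "list_all2 (\<lambda>a b. (a,b)\<in>\<pi>) xs zs" "list_all2 (\<lambda>a b. (a,b)\<in>\<pi>) xs' zs'"
    "list_all2 (sim_eq TYPE('v) q) zs zs'"
  shows "list_all2 (sim_eq TYPE('v) q) xs xs'"
  using assms(2-4) by (auto simp: list_all2_conv_all_nth) (metis sim_pres[OF assms(1)])

lemma l2_sym: "list_all2 (sim_eq TYPE('v) q) xs ys \<Longrightarrow> list_all2 (sim_eq TYPE('v) q) ys xs"
  by (auto simp: list_all2_conv_all_nth sim_eq_def)

lemma comp_mid: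
  fixes R S :: "'a list set"
  assumes pi: "\<pi> \<in> Sim TYPE('v) q" and si: "\<sigma> \<in> Sim TYPE('v) q"
    and R: "R \<subseteq> {as. length as = k}" and S: "S \<subseteq> {as. length as = k}"
    and iR: "invariant (sim_eq TYPE('v) q) R" and iS: "invariant (sim_eq TYPE('v) q) S"
    and rs: "rel_sim (\<lambda>a b. (a,b) \<in> \<pi> O \<sigma>) R S"
  defines "T \<equiv> {zs. length zs = k \<and> (\<exists>xs\<in>R. list_all2 (\<lambda>a b. (a,b)\<in>\<pi>) xs zs)}"
  shows "invariant (sim_eq TYPE('v) q) T" "rel_sim (\<lambda>a b. (a,b)\<in>\<pi>) R T"
    "rel_sim (\<lambda>a b. (a,b)\<in>\<sigma>) T S"
proof -
  have sp: "similarity \<pi>" and ss: "similarity \<sigma>" using pi si by (auto simp: Sim_def)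
  have one: "zs' \<in> T" if h1: "list_all2 (sim_eq TYPE('v) q) zs zs'" and h2: "zs \<in> T" for zs zs'
  proof -
    obtain xs where xs: "xs \<in> R" "list_all2 (\<lambda>a b. (a,b)\<in>\<pi>) xs zs" "length zs = k"
      using h2 by (auto simp: T_def)
    define xs' where "xs' = map (\<lambda>z. SOME u. (u,z)\<in>\<pi>) zs'"
    have xs': "list_all2 (\<lambda>a b. (a,b)\<in>\<pi>) xs' zs'" using pick_left[OF sp] by (simp add: xs'_def)
    have "list_all2 (sim_eq TYPE('v) q) xs xs'" using l2_sim_pres[OF pi xs(2) xs' h1] .
    then have "xs' \<in> R" using iR xs(1) by (auto simp: invariant_def rel_sim_def)
    moreover have "length zs' = k" using h1 xs(3) list_all2_lengthD by fastforce
    ultimately show ?thesis using xs' by (auto simp: T_def)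
  qed
  show "invariant (sim_eq TYPE('v) q) T"
    unfolding invariant_def rel_sim_def using one l2_sym by blast
  show "rel_sim (\<lambda>a b. (a,b)\<in>\<pi>) R T" unfolding rel_sim_def
  proof (intro allI impI iffI)
    fix xs zs assume h: "list_all2 (\<lambda>a b. (a,b)\<in>\<pi>) xs zs" "xs \<in> R"
    then show "zs \<in> T" using R list_all2_lengthD by (fastforce simp: T_def)
  next
    fix xs zs assume h: "list_all2 (\<lambda>a b. (a,b)\<in>\<pi>) xs zs" "zs \<in> T"
    then obtain xs' where xs': "xs' \<in> R" "list_all2 (\<lambda>a b. (a,b)\<in>\<pi>) xs' zs" by (auto simp: T_def)
    define ys where "ys = map (\<lambda>z. SOME u. (z,u)\<in>\<sigma>) zs"
    have ys: "list_all2 (\<lambda>a b. (a,b)\<in>\<sigma>) zs ys" using pick_right[OF ss] by (simp add: ys_def)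
    have "xs' \<in> R \<longleftrightarrow> ys \<in> S" using rs l2_comp_intro[OF xs'(2) ys] by (auto simp: rel_sim_def)
    moreover have "xs \<in> R \<longleftrightarrow> ys \<in> S" using rs l2_comp_intro[OF h(1) ys] by (auto simp: rel_sim_def)
    ultimately show "xs \<in> R" using xs'(1) by blast
  qed
  show "rel_sim (\<lambda>a b. (a,b)\<in>\<sigma>) T S" unfolding rel_sim_def
  proof (intro allI impI iffI)
    fix zs ys assume h: "list_all2 (\<lambda>a b. (a,b)\<in>\<sigma>) zs ys" "zs \<in> T"
    then obtain xs where xs: "xs \<in> R" "list_all2 (\<lambda>a b. (a,b)\<in>\<pi>) xs zs" by (auto simp: T_def)
    then show "ys \<in> S" using rs l2_comp_intro[OF xs(2) h(1)] by (auto simp: rel_sim_def)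
  next
    fix zs ys assume h: "list_all2 (\<lambda>a b. (a,b)\<in>\<sigma>) zs ys" "ys \<in> S"
    define xs where "xs = map (\<lambda>z. SOME u. (u,z)\<in>\<pi>) zs"
    have xs: "list_all2 (\<lambda>a b. (a,b)\<in>\<pi>) xs zs" using pick_left[OF sp] by (simp add: xs_def)
    have "xs \<in> R" using rs l2_comp_intro[OF xs h(1)] h(2) by (auto simp: rel_sim_def)
    moreover have "length zs = k" using h S list_all2_lengthD by fastforce
    ultimately show "zs \<in> T" using xs by (auto simp: T_def)
  qed
qed


lemma Sim_comp:
  assumes pi: "\<pi> \<in> Sim TYPE('v) q" and si: "\<sigma> \<in> Sim TYPE('v) q"
  shows "\<pi> O \<sigma> \<in> Sim TYPE('v) q"
proof -
  have sp: "similarity \<pi>" and ss: "similarity \<sigma>" using pi si by (auto simp: Sim_def)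
  have "similarity (\<pi> O \<sigma>)" using sp ss unfolding similarity_def by blast
  moreover have "invariant (\<lambda>a b. (a, b) \<in> \<pi> O \<sigma>) R" if "Rel k R \<in> q" for k R
  proof -
    have "invariant (\<lambda>a b. (a, b) \<in> \<pi>) R" "invariant (\<lambda>a b. (a, b) \<in> \<sigma>) R"
      using pi si that by (auto simp: Sim_def)
    then show ?thesis unfolding invariant_def rel_sim_def using l2_comp by metis
  qed
  moreover have "quant_inv (sim_eq TYPE('v) q) (\<pi> O \<sigma>) ks Q" if "Quant ks Q \<in> q" for ks Q
  proof -
    have qp: "quant_inv (sim_eq TYPE('v) q) \<pi> ks Q" and qs: "quant_inv (sim_eq TYPE('v) q) \<sigma> ks Q"
      using pi si that by (auto simp: Sim_def)
    show ?thesis unfolding quant_inv_def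
    proof (intro allI impI)
      fix Rs Ss :: "'a list set list"
      assume H: "length Rs = length ks \<and> length Ss = length ks \<and>
        (\<forall>i<length ks. Rs ! i \<subseteq> {as. length as = ks ! i} \<and> Ss ! i \<subseteq> {as. length as = ks ! i} \<and>
            invariant (sim_eq TYPE('v) q) (Rs ! i) \<and> invariant (sim_eq TYPE('v) q) (Ss ! i) \<and>
            rel_sim (\<lambda>a b. (a, b) \<in> \<pi> O \<sigma>) (Rs ! i) (Ss ! i))"
      define Ts where "Ts = map (\<lambda>i. {zs. length zs = ks!i \<and> (\<exists>xs\<in>Rs!i. list_all2 (\<lambda>a b. (a,b)\<in>\<pi>) xs zs)}) [0..<length ks]"
      have T: "Ts ! i \<subseteq> {as. length as = ks ! i} \<and> invariant (sim_eq TYPE('v) q) (Ts ! i) \<and>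
         rel_sim (\<lambda>a b. (a,b)\<in>\<pi>) (Rs ! i) (Ts ! i) \<and> rel_sim (\<lambda>a b. (a,b)\<in>\<sigma>) (Ts ! i) (Ss ! i)"
        if "i < length ks" for i
        using comp_mid[OF pi si, of "Rs ! i" "ks ! i" "Ss ! i"] H that by (auto simp: Ts_def)
      have "Rs \<in> Q \<longleftrightarrow> Ts \<in> Q" using qp H T unfolding quant_inv_def by (simp add: Ts_def)
      also have "\<dots> \<longleftrightarrow> Ss \<in> Q" using qs H T unfolding quant_inv_def by (simp add: Ts_def)
      finally show "Rs \<in> Q \<longleftrightarrow> Ss \<in> Q" .
    qed
  qed
  ultimately show ?thesis by (auto simp: Sim_def)
qed

lemma l2conv: "list_all2 (\<lambda>a b. (a,b) \<in> \<pi>\<inverse>) xs ys \<longleftrightarrow> list_all2 (\<lambda>a b. (a,b) \<in> \<pi>) ys xs"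
  by (auto simp: list_all2_conv_all_nth)

lemma rel_sim_conv:
  "rel_sim (\<lambda>a b. (a,b) \<in> \<pi>\<inverse>) R S \<longleftrightarrow> rel_sim (\<lambda>a b. (a,b) \<in> \<pi>) S R"
  unfolding rel_sim_def l2conv by blast

lemma Sim_conv:
  assumes pi: "\<pi> \<in> Sim TYPE('v) q"
  shows "\<pi>\<inverse> \<in> Sim TYPE('v) q"
proof -
  have "similarity (\<pi>\<inverse>)" using pi unfolding Sim_def similarity_def by blast
  moreover have "invariant (\<lambda>a b. (a, b) \<in> \<pi>\<inverse>) R" if "Rel k R \<in> q" for k R
  proof -
    have "rel_sim (\<lambda>a b. (a,b) \<in> \<pi>) R R" using pi that by (auto simp: Sim_def invariant_def)
    then show ?thesis by (simp only: invariant_def rel_sim_conv)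
  qed
  moreover have "quant_inv (sim_eq TYPE('v) q) (\<pi>\<inverse>) ks Q" if "Quant ks Q \<in> q" for ks Q
  proof -
    have qp: "quant_inv (sim_eq TYPE('v) q) \<pi> ks Q" using pi that by (auto simp: Sim_def)
    show ?thesis unfolding quant_inv_def rel_sim_conv
    proof (intro allI impI)
      fix Rs Ss :: "'a list set list"
      assume H: "length Rs = length ks \<and> length Ss = length ks \<and>
        (\<forall>i<length ks. Rs ! i \<subseteq> {as. length as = ks ! i} \<and> Ss ! i \<subseteq> {as. length as = ks ! i} \<and>
            invariant (sim_eq TYPE('v) q) (Rs ! i) \<and> invariant (sim_eq TYPE('v) q) (Ss ! i) \<and>
            rel_sim (\<lambda>a b. (a, b) \<in> \<pi>) (Ss ! i) (Rs ! i))"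
      then have "Ss \<in> Q \<longleftrightarrow> Rs \<in> Q" using qp unfolding quant_inv_def by blast
      then show "Rs \<in> Q \<longleftrightarrow> Ss \<in> Q" by blast
    qed
  qed
  ultimately show ?thesis by (auto simp: Sim_def)
qed

lemma Sim_sub:
  assumes pi: "\<pi> \<in> Sim TYPE('v) q" and s': "similarity \<pi>'" and sub: "\<pi>' \<subseteq> \<pi>"
  shows "\<pi>' \<in> Sim TYPE('v) q"
proof -
  have mono: "list_all2 (\<lambda>a b. (a,b)\<in>\<pi>) xs ys" if "list_all2 (\<lambda>a b. (a,b)\<in>\<pi>') xs ys" for xs ys
    using that sub by (auto elim: list_all2_mono)
  have "invariant (\<lambda>a b. (a, b) \<in> \<pi>') R" if "Rel k R \<in> q" for k R
    using pi that mono by (auto simp: Sim_def invariant_def rel_sim_def)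
  moreover have "quant_inv (sim_eq TYPE('v) q) \<pi>' ks Q" if "Quant ks Q \<in> q" for ks Q
  proof -
    have qp: "quant_inv (sim_eq TYPE('v) q) \<pi> ks Q" using pi that by (auto simp: Sim_def)
    have up: "rel_sim (\<lambda>a b. (a,b)\<in>\<pi>) R S"
      if iS: "invariant (sim_eq TYPE('v) q) S" and r: "rel_sim (\<lambda>a b. (a,b)\<in>\<pi>') R S" for R S
      unfolding rel_sim_def
    proof (intro allI impI)
      fix xs ys assume h: "list_all2 (\<lambda>a b. (a,b)\<in>\<pi>) xs ys"
      define ys' where "ys' = map (\<lambda>z. SOME u. (z,u)\<in>\<pi>') xs"
      have ys': "list_all2 (\<lambda>a b. (a,b)\<in>\<pi>') xs ys'" using pick_right[OF s'] by (simp add: ys'_def)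
      have "list_all2 (sim_eq TYPE('v) q) xs xs" by (simp add: list_all2_conv_all_nth sim_eq_def)
      then have "list_all2 (sim_eq TYPE('v) q) ys ys'"
        using l2_sim_pres[OF Sim_conv[OF pi]] h mono[OF ys']
        by (metis (no_types, lifting) list_all2_conv_all_nth converse_iff)
      then show "xs \<in> R \<longleftrightarrow> ys \<in> S" using r ys' iS by (auto simp: rel_sim_def invariant_def)
    qed
    show ?thesis unfolding quant_inv_def
    proof (intro allI impI)
      fix Rs Ss :: "'a list set list"
      assume H: "length Rs = length ks \<and> length Ss = length ks \<and>
        (\<forall>i<length ks. Rs ! i \<subseteq> {as. length as = ks ! i} \<and> Ss ! i \<subseteq> {as. length as = ks ! i} \<and>
            invariant (sim_eq TYPE('v) q) (Rs ! i) \<and> invariant (sim_eq TYPE('v) q) (Ss ! i) \<and>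
            rel_sim (\<lambda>a b. (a, b) \<in> \<pi>') (Rs ! i) (Ss ! i))"
      then show "Rs \<in> Q \<longleftrightarrow> Ss \<in> Q" using qp up unfolding quant_inv_def by blast
    qed
  qed
  ultimately show ?thesis using s' by (auto simp: Sim_def)
qed


lemma Id_Sim: "Id \<in> Sim TYPE('v) q"
proof -
  have l2id: "list_all2 (\<lambda>a b. (a, b) \<in> Id) xs ys \<longleftrightarrow> xs = ys" for xs ys :: "'a list"
    by (auto simp: list_all2_conv_all_nth list_eq_iff_nth_eq)
  have "similarity Id" by (auto simp: similarity_def)
  moreover have "invariant (\<lambda>a b. (a, b) \<in> Id) R" for R :: "'a list set"
    unfolding invariant_def rel_sim_def l2id by blast
  moreover have "quant_inv (sim_eq TYPE('v) q) Id ks Q" for ks Q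
    unfolding quant_inv_def
  proof (intro allI impI)
    fix Rs Ss :: "'a list set list"
    assume H: "length Rs = length ks \<and> length Ss = length ks \<and>
        (\<forall>i<length ks. Rs ! i \<subseteq> {as. length as = ks ! i} \<and> Ss ! i \<subseteq> {as. length as = ks ! i} \<and>
            invariant (sim_eq TYPE('v) q) (Rs ! i) \<and> invariant (sim_eq TYPE('v) q) (Ss ! i) \<and>
            rel_sim (\<lambda>a b. (a, b) \<in> Id) (Rs ! i) (Ss ! i))"
    have "Rs = Ss"
    proof (rule nth_equalityI)
      show "length Rs = length Ss" using H by simp
      fix i assume "i < length Rs"
      then have "rel_sim (\<lambda>a b. (a, b) \<in> Id) (Rs ! i) (Ss ! i)" using H by auto
      then show "Rs ! i = Ss ! i" unfolding rel_sim_def l2id by blast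
    qed
    then show "Rs \<in> Q \<longleftrightarrow> Ss \<in> Q" by simp
  qed
  ultimately show ?thesis by (auto simp: Sim_def)
qed

lemma approx_refl: "Id \<in> \<Pi> \<Longrightarrow> (a, a) \<in> approx \<Pi>"
  unfolding approx_def by (auto intro!: bexI[of _ Id] simp: list.rel_refl)

lemma approx_chain:
  assumes inv: "\<forall>\<pi>\<in>\<Pi>. invariant (\<lambda>a b. (a,b)\<in>\<pi>) R"
    and h: "list_all2 (\<lambda>a b. (a,b) \<in> approx \<Pi>) xs ys"
  shows "us @ xs \<in> R \<longleftrightarrow> us @ ys \<in> R"
  using h
proof (induction arbitrary: us rule: list_all2_induct)
  case Nil then show ?case by simp
next
  case (Cons x xs y ys)
  obtain \<pi> where p: "\<pi> \<in> \<Pi>" "list_all2 (\<lambda>a b. (a,b)\<in>\<pi>) (x # us @ xs) (y # us @ xs)"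
    using Cons.hyps(1) unfolding approx_def by blast
  have "list_all2 (\<lambda>a b. (a,b)\<in>\<pi>) (us @ xs) (us @ xs)" "(x,y)\<in>\<pi>" using p(2) by auto
  then have "list_all2 (\<lambda>a b. (a,b)\<in>\<pi>) us us" "list_all2 (\<lambda>a b. (a,b)\<in>\<pi>) xs xs"
    by (auto simp: list_all2_append)
  then have "list_all2 (\<lambda>a b. (a,b)\<in>\<pi>) (us @ x # xs) (us @ y # xs)"
    using \<open>(x,y)\<in>\<pi>\<close> by (intro list_all2_appendI) auto
  then have "us @ x # xs \<in> R \<longleftrightarrow> us @ y # xs \<in> R"
    using inv p(1) by (auto simp: invariant_def rel_sim_def)
  also have "\<dots> \<longleftrightarrow> us @ y # ys \<in> R" using Cons.IH[of "us @ [y]"] by simp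
  finally show ?case .
qed

lemma approx_Sim: "approx (Sim TYPE('v) q) \<in> Sim TYPE('v) q"
proof -
  let ?A = "approx (Sim TYPE('v) q)"
  have refl: "(a, a) \<in> ?A" for a using approx_refl[OF Id_Sim] .
  have "similarity ?A" using refl by (auto simp: similarity_def)
  moreover have "invariant (\<lambda>a b. (a, b) \<in> ?A) R" if "Rel k R \<in> q" for k R
  proof -
    have "\<forall>\<pi>\<in>Sim TYPE('v) q. invariant (\<lambda>a b. (a,b)\<in>\<pi>) R" using that by (auto simp: Sim_def)
    from approx_chain[OF this, of _ _ "[]"] show ?thesis by (auto simp: invariant_def rel_sim_def)
  qed
  moreover have "quant_inv (sim_eq TYPE('v) q) ?A ks Q" for ks Q
    unfolding quant_inv_def
  proof (intro allI impI)
    fix Rs Ss :: "'a list set list"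
    assume H: "length Rs = length ks \<and> length Ss = length ks \<and>
        (\<forall>i<length ks. Rs ! i \<subseteq> {as. length as = ks ! i} \<and> Ss ! i \<subseteq> {as. length as = ks ! i} \<and>
            invariant (sim_eq TYPE('v) q) (Rs ! i) \<and> invariant (sim_eq TYPE('v) q) (Ss ! i) \<and>
            rel_sim (\<lambda>a b. (a, b) \<in> ?A) (Rs ! i) (Ss ! i))"
    have "Rs = Ss"
    proof (rule nth_equalityI)
      show "length Rs = length Ss" using H by simp
      fix i assume "i < length Rs"
      then have r: "rel_sim (\<lambda>a b. (a, b) \<in> ?A) (Rs ! i) (Ss ! i)" using H by auto
      have "list_all2 (\<lambda>a b. (a, b) \<in> ?A) xs xs" for xs using refl by (simp add: list.rel_refl)
      then show "Rs ! i = Ss ! i" using r unfolding rel_sim_def by blast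
    qed
    then show "Rs \<in> Q \<longleftrightarrow> Ss \<in> Q" by simp
  qed
  ultimately show ?thesis by (auto simp: Sim_def)
qed

theorem lemma16:
  fixes q :: "'a operation set"
  assumes "ops_wf q"
  shows "full_monoid (Sim TYPE('v) q)"
  unfolding full_monoid_def
  using Sim_comp Sim_conv approx_Sim Sim_sub by blast

end
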